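(* Let $T$ be the rank-one cutting and stacking transformation with $C_0=I=(0,1)$, $r_n=n+2$, $h_n=5^{n(n+1)/2}$ for all $n\ge0$, and spacers chosen so that for each $n$ $$H_n=\{0\}\cup\{j\cdot5^{n(n+1)/2}:1\le j\le\lceil\sqrt n\rceil\}\cup\{5^{n(n+1)/2+i}:\lceil\sqrt n\rceil\le i\le n\}.$$ Then $T$ is of zero type: $\mu(A\cap T^kA)\to0$ as $k\to\infty$ for every measurable $A$ of finite measure.
   Context: Cutting and stacking: $C_0$ is a single level $I$; column $C_n$ of height $h_n$ is cut into $r_n$ equal-width subcolumns, $s_{n,k}\ge0$ spacers are placed above the $k$-th subcolumn ($0\le k\le r_n-1$), and subcolumns are stacked left to right to form $C_{n+1}$; $T$ maps each level to the one above. With $h_{n,k}=h_n+s_{n,k}$, $H_n=\{0\}\cup\{\sum_{k=0}^{i}h_{n,k}:0\le i<r_n-1\}$; so the prescriptions above determine $s_{n,k}$ for $k<r_n-1$, and $s_{n,r_n-1}$ is determined by $h_{n+1}=\sum_{k}h_{n,k}=5^{(n+1)(n+2)/2}$ (in particular $s_{n,r_n-1}>0$). $\mu$ is Lebesgue measure on the resulting space (infinite measure). *)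

theory Defs
  imports "HOL-Analysis.Analysis"
begin

text \<open>Generic rank-one cutting and stacking, parameterised by the cut numbers
  r n (column C_n is cut into r n subcolumns) and the spacer numbers s n k
  (number of spacers placed above the k-th subcolumn of C_n).
  C_0 is the single level [0,1); new spacers of stage n are placed in R to the
  right of all material used so far.  Levels are half-open intervals.\<close>

primrec cs_height :: "(nat \<Rightarrow> nat) \<Rightarrow> (nat \<Rightarrow> nat \<Rightarrow> nat) \<Rightarrow> nat \<Rightarrow> nat" where
  "cs_height r s 0 = 1"
| "cs_height r s (Suc n) = (\<Sum>k<r n. cs_height r s n + s n k)"

definition cs_hk :: "(nat \<Rightarrow> nat) \<Rightarrow> (nat \<Rightarrow> nat \<Rightarrow> nat) \<Rightarrow> nat \<Rightarrow> nat \<Rightarrow> nat" where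
  "cs_hk r s n k = cs_height r s n + s n k"

definition cs_H :: "(nat \<Rightarrow> nat) \<Rightarrow> (nat \<Rightarrow> nat \<Rightarrow> nat) \<Rightarrow> nat \<Rightarrow> nat set" where
  "cs_H r s n = {0} \<union> {(\<Sum>k\<le>i. cs_hk r s n k) | i. i < r n - 1}"

definition cs_width :: "(nat \<Rightarrow> nat) \<Rightarrow> nat \<Rightarrow> real" where
  "cs_width r n = 1 / (\<Prod>i<n. real (r i))"

text \<open>total length of R used by the columns C_0, ..., C_n\<close>
primrec cs_len :: "(nat \<Rightarrow> nat) \<Rightarrow> (nat \<Rightarrow> nat \<Rightarrow> nat) \<Rightarrow> nat \<Rightarrow> real" where
  "cs_len r s 0 = 1"
| "cs_len r s (Suc n) = cs_len r s n + real (\<Sum>k<r n. s n k) * cs_width r (Suc n)"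

text \<open>level index in C_{n+1} at which the k-th subcolumn of C_n starts\<close>
definition cs_off :: "(nat \<Rightarrow> nat) \<Rightarrow> (nat \<Rightarrow> nat \<Rightarrow> nat) \<Rightarrow> nat \<Rightarrow> nat \<Rightarrow> nat" where
  "cs_off r s n k = (\<Sum>k'<k. cs_hk r s n k')"

text \<open>left endpoint of the j-th level (counted from the bottom, j < h_n) of C_n\<close>
primrec cs_lev :: "(nat \<Rightarrow> nat) \<Rightarrow> (nat \<Rightarrow> nat \<Rightarrow> nat) \<Rightarrow> nat \<Rightarrow> nat \<Rightarrow> real" where
  "cs_lev r s 0 = (\<lambda>j. 0)"
| "cs_lev r s (Suc n) = (\<lambda>j.
     let k = (GREATEST k. k < r n \<and> cs_off r s n k \<le> j);
         t = j - cs_off r s n k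
     in if t < cs_height r s n
        then cs_lev r s n t + real k * cs_width r (Suc n)
        else cs_len r s n + real ((\<Sum>k'<k. s n k') + (t - cs_height r s n)) * cs_width r (Suc n))"

definition cs_level :: "(nat \<Rightarrow> nat) \<Rightarrow> (nat \<Rightarrow> nat \<Rightarrow> nat) \<Rightarrow> nat \<Rightarrow> nat \<Rightarrow> real set" where
  "cs_level r s n j = {cs_lev r s n j ..< cs_lev r s n j + cs_width r n}"

definition cs_space :: "(nat \<Rightarrow> nat) \<Rightarrow> (nat \<Rightarrow> nat \<Rightarrow> nat) \<Rightarrow> real set" where
  "cs_space r s = (\<Union>n. \<Union>j\<in>{..<cs_height r s n}. cs_level r s n j)"

text \<open>T maps each level (not the top one) of C_n to the level above by translation;
  on the remaining null set (points lying in the top level of every column) T is the identity.\<close>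
definition cs_T :: "(nat \<Rightarrow> nat) \<Rightarrow> (nat \<Rightarrow> nat \<Rightarrow> nat) \<Rightarrow> real \<Rightarrow> real" where
  "cs_T r s x =
    (if \<exists>n j. Suc j < cs_height r s n \<and> x \<in> cs_level r s n j
     then (SOME y. \<exists>n j. Suc j < cs_height r s n \<and> x \<in> cs_level r s n j \<and>
                          y = x - cs_lev r s n j + cs_lev r s n (Suc j))
     else x)"

definition zero_type :: "real set \<Rightarrow> (real \<Rightarrow> real) \<Rightarrow> bool" where
  "zero_type X T \<longleftrightarrow>
     (\<forall>A. A \<in> sets lebesgue \<and> A \<subseteq> X \<and> emeasure lebesgue A < \<infinity> \<longrightarrow>
        (\<lambda>k. measure lebesgue (A \<inter> (T ^^ k) ` A)) \<longlonglongrightarrow> 0)"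

end

theory Submission
  imports Defs "HOL-Real_Asymp.Real_Asymp"
begin


declare cs_height.simps(2)[simp del]

locale cs0 =
  fixes r :: "nat \<Rightarrow> nat" and s :: "nat \<Rightarrow> nat \<Rightarrow> nat"
  assumes rpos: "\<And>n. 0 < r n"
begin

abbreviation "h \<equiv> cs_height r s"
abbreviation "off \<equiv> cs_off r s"
abbreviation "w \<equiv> cs_width r"
abbreviation "hk \<equiv> cs_hk r s"

lemma off_0[simp]: "off n 0 = 0" by (simp add: cs_off_def)
lemma off_Suc: "off n (Suc k) = off n k + hk n k" by (simp add: cs_off_def)
lemma off_r: "off n (r n) = h (Suc n)" by (simp add: cs_off_def cs_hk_def cs_height.simps(2))
lemma h_Suc: "h (Suc n) = r n * h n + (\<Sum>k<r n. s n k)"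
  by (simp add: sum.distrib cs_height.simps(2))
lemma h_pos: "1 \<le> h n"
proof (induction n)
  case (Suc n)
  have "h n + s n 0 \<le> (\<Sum>k<r n. h n + s n k)"
    using rpos[of n] by (intro member_le_sum) auto
  with Suc show ?case by (simp add: cs_height.simps(2))
qed simp
lemma hk_ge: "h n \<le> hk n a" by (simp add: cs_hk_def)

lemma off_less: "a < b \<Longrightarrow> off n a + hk n a \<le> off n b"
proof (induction b)
  case (Suc b)
  then show ?case using hk_ge[of n b] by (cases "a = b") (auto simp: off_Suc)
qed simp

lemma off_gap: "a < b \<Longrightarrow> off n a + h n \<le> off n b"
  using off_less[of a b n] hk_ge[of n a] by simp

lemma off_strict: "a < b \<Longrightarrow> off n a < off n b"
  using off_gap[of a b n] h_pos[of n] by simp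

lemma off_inj: "off n a = off n b \<Longrightarrow> a = b"
  using off_strict[of a b n] off_strict[of b a n] by (cases a b rule: linorder_cases) auto

lemma off_top: "a < r n \<Longrightarrow> off n a + hk n a \<le> h (Suc n)"
  using off_less[of a "r n" n] off_r[of n] by (cases "Suc a = r n") (auto simp: off_Suc)

lemma off_top': "a < r n \<Longrightarrow> off n a + h n \<le> h (Suc n)"
  using off_top[of a n] hk_ge[of n a] by simp

lemma w_Suc: "w (Suc n) = w n / r n"
  by (simp add: cs_width_def)
lemma w_pos: "0 < w n"
  using rpos by (simp add: cs_width_def prod_pos)

lemma greatest_eq:
  assumes "a < r n" "t < hk n a"
  shows "(GREATEST k. k < r n \<and> off n k \<le> off n a + t) = a"
proof (rule Greatest_equality)
  show "a < r n \<and> off n a \<le> off n a + t" using assms by simp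
  fix y assume y: "y < r n \<and> off n y \<le> off n a + t"
  show "y \<le> a"
  proof (rule ccontr)
    assume "\<not> y \<le> a"
    then have "off n a + hk n a \<le> off n y" by (intro off_less) simp
    with y assms show False by simp
  qed
qed

lemma decomp:
  assumes "j < h (Suc n)"
  shows "\<exists>a t. a < r n \<and> t < hk n a \<and> j = off n a + t"
proof -
  define a where "a = (GREATEST k. k < r n \<and> off n k \<le> j)"
  have P0: "0 < r n \<and> off n 0 \<le> j" using rpos by simp
  have Pa: "a < r n \<and> off n a \<le> j"
    unfolding a_def by (rule GreatestI_ex_nat[where b = "r n"]) (use P0 in auto)
  have "j < off n (Suc a)"
  proof (cases "Suc a = r n")
    case True then show ?thesis using assms off_r by simp
  next
    case False
    then have "Suc a < r n" using Pa by simp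
    moreover have "\<not> (Suc a < r n \<and> off n (Suc a) \<le> j)"
    proof
      assume "Suc a < r n \<and> off n (Suc a) \<le> j"
      then have "Suc a \<le> a" unfolding a_def by (intro Greatest_le_nat[where b = "r n"]) auto
      then show False by simp
    qed
    ultimately show ?thesis by simp
  qed
  then show ?thesis using Pa by (intro exI[of _ a] exI[of _ "j - off n a"]) (auto simp: off_Suc)
qed

primrec ell :: "nat \<Rightarrow> nat \<Rightarrow> nat" where
  "ell 0 = (\<lambda>j. 0)"
| "ell (Suc n) = (\<lambda>j.
     let k = (GREATEST k. k < r n \<and> off n k \<le> j);
         t = j - off n k
     in if t < h n then ell n t * r n + k
        else h n * r n + ((\<Sum>k'<k. s n k') + (t - h n)))"

lemma ell_old: "a < r n \<Longrightarrow> t < h n \<Longrightarrow> ell (Suc n) (off n a + t) = ell n t * r n + a"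
  using greatest_eq[of a n t] hk_ge[of n a] by (simp add: Let_def)

lemma ell_sp: "a < r n \<Longrightarrow> h n \<le> t \<Longrightarrow> t < hk n a \<Longrightarrow>
   ell (Suc n) (off n a + t) = h n * r n + ((\<Sum>k'<a. s n k') + (t - h n))"
  using greatest_eq[of a n t] by (simp add: Let_def)

declare ell.simps(2)[simp del]

lemma len_eq: "cs_len r s n = real (h n) * w n"
proof (induction n)
  case 0 then show ?case by (simp add: cs_width_def)
next
  case (Suc n)
  have "cs_len r s (Suc n) = real (h n) * w n + real (\<Sum>k<r n. s n k) * w (Suc n)"
    using Suc by simp
  also have "w n = real (r n) * w (Suc n)" using rpos[of n] by (simp add: w_Suc)
  finally show ?case by (simp add: h_Suc algebra_simps)
qed

lemma lev_eq: "cs_lev r s n j = real (ell n j) * w n"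
proof (induction n arbitrary: j)
  case 0 then show ?case by simp
next
  case (Suc n)
  have wn: "w n = real (r n) * w (Suc n)" using rpos[of n] by (simp add: w_Suc)
  show ?case
    by (simp add: Let_def Suc len_eq wn algebra_simps ell.simps(2))
qed

lemma sum_lt_step: "(a1::nat) < a2 \<Longrightarrow> (\<Sum>k<a1. f k) + (f a1::nat) \<le> (\<Sum>k<a2. f k)"
proof -
  assume "a1 < a2"
  then have "(\<Sum>k<Suc a1. f k) \<le> (\<Sum>k<a2. f k)" by (intro sum_mono2) auto
  then show ?thesis by simp
qed

lemma ell_bound: "j < h n \<Longrightarrow> ell n j < h n"
proof (induction n arbitrary: j)
  case 0 then show ?case by simp
next
  case (Suc n)
  obtain a t where at: "a < r n" "t < hk n a" "j = off n a + t" using decomp[OF Suc.prems] by blast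
  show ?case
  proof (cases "t < h n")
    case True
    have "ell n t * r n + a < (ell n t + 1) * r n" using at by simp
    also have "\<dots> \<le> h n * r n" using Suc.IH[OF True] by (intro mult_right_mono) auto
    finally show ?thesis using True at by (simp add: ell_old h_Suc mult.commute)
  next
    case False
    have "(\<Sum>k'<a. s n k') + (t - h n) < (\<Sum>k'<a. s n k') + s n a" using at False by (simp add: cs_hk_def)
    also have "\<dots> \<le> (\<Sum>k'<r n. s n k')"
      using sum_lt_step[of a "r n" "s n"] at by simp
    finally show ?thesis using False at by (simp add: ell_sp h_Suc mult.commute)
  qed
qed

lemma ell_inj: "j1 < h n \<Longrightarrow> j2 < h n \<Longrightarrow> ell n j1 = ell n j2 \<Longrightarrow> j1 = j2"
proof (induction n arbitrary: j1 j2)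
  case 0 then show ?case by simp
next
  case (Suc n)
  obtain a1 t1 where at1: "a1 < r n" "t1 < hk n a1" "j1 = off n a1 + t1" using decomp[OF Suc.prems(1)] by blast
  obtain a2 t2 where at2: "a2 < r n" "t2 < hk n a2" "j2 = off n a2 + t2" using decomp[OF Suc.prems(2)] by blast
  have sp: "(\<Sum>k'<b1. s n k') + (u1 - h n) \<noteq> (\<Sum>k'<b2. s n k') + (u2 - h n)"
    if "b1 < b2" "u1 < hk n b1" "h n \<le> u1" for b1 b2 u1 u2
  proof -
    have "(\<Sum>k'<b1. s n k') + (u1 - h n) < (\<Sum>k'<b1. s n k') + s n b1" using that by (simp add: cs_hk_def)
    also have "\<dots> \<le> (\<Sum>k'<b2. s n k')" using sum_lt_step[of b1 b2 "s n"] that by simp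
    finally show ?thesis by simp
  qed
  show ?case
  proof (cases "t1 < h n"; cases "t2 < h n")
    assume t1: "t1 < h n" and t2: "t2 < h n"
    have eq: "ell n t1 * r n + a1 = ell n t2 * r n + a2"
      using Suc.prems(3) at1 at2 t1 t2 by (simp add: ell_old)
    then have "(ell n t1 * r n + a1) mod r n = (ell n t2 * r n + a2) mod r n" by simp
    then have "a1 = a2" using at1 at2 by simp
    with eq have "ell n t1 = ell n t2" using rpos[of n] by simp
    then have "t1 = t2" using Suc.IH t1 t2 by blast
    with \<open>a1 = a2\<close> at1 at2 show ?thesis by simp
  next
    assume t1: "t1 < h n" and t2: "\<not> t2 < h n"
    have "ell n t1 * r n + a1 < h n * r n"
    proof -
      have "ell n t1 * r n + a1 < (ell n t1 + 1) * r n" using at1 by simp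
      also have "\<dots> \<le> h n * r n" using ell_bound[OF t1] by (intro mult_right_mono) auto
      finally show ?thesis .
    qed
    then show ?thesis using Suc.prems(3) at1 at2 t1 t2 by (simp add: ell_old ell_sp)
  next
    assume t1: "\<not> t1 < h n" and t2: "t2 < h n"
    have "ell n t2 * r n + a2 < h n * r n"
    proof -
      have "ell n t2 * r n + a2 < (ell n t2 + 1) * r n" using at2 by simp
      also have "\<dots> \<le> h n * r n" using ell_bound[OF t2] by (intro mult_right_mono) auto
      finally show ?thesis .
    qed
    then show ?thesis using Suc.prems(3) at1 at2 t1 t2 by (simp add: ell_old ell_sp)
  next
    assume t1: "\<not> t1 < h n" and t2: "\<not> t2 < h n"
    have eq: "(\<Sum>k'<a1. s n k') + (t1 - h n) = (\<Sum>k'<a2. s n k') + (t2 - h n)"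
      using Suc.prems(3) at1 at2 t1 t2 by (simp add: ell_sp)
    have "a1 = a2"
    proof (rule ccontr)
      assume "a1 \<noteq> a2"
      then consider "a1 < a2" | "a2 < a1" by linarith
      then show False
      proof cases
        case 1 then show False using sp[of a1 a2 t1 t2] eq at1 t1 by simp
      next
        case 2 then show False using sp[of a2 a1 t2 t1] eq at2 t2 by simp
      qed
    qed
    then show ?thesis using eq at1 at2 t1 t2 by simp
  qed
qed

abbreviation "L n j \<equiv> real (ell n j) * w n"
abbreviation "lv \<equiv> cs_level r s"

lemma lv_eq: "lv n j = {L n j ..< L n j + w n}"
  by (simp add: cs_level_def lev_eq)

lemma lv_disj: "j1 < h n \<Longrightarrow> j2 < h n \<Longrightarrow> j1 \<noteq> j2 \<Longrightarrow> lv n j1 \<inter> lv n j2 = {}"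
proof -
  assume a: "j1 < h n" "j2 < h n" "j1 \<noteq> j2"
  then have ne: "ell n j1 \<noteq> ell n j2" using ell_inj by blast
  have wp: "0 < w n" by (rule w_pos)
  show ?thesis
  proof (cases "ell n j1 < ell n j2")
    case True
    then have "real (ell n j1) + 1 \<le> real (ell n j2)" by linarith
    then have "L n j1 + w n \<le> L n j2" using wp by (metis distrib_right mult_1 mult_right_mono less_imp_le)
    then show ?thesis by (auto simp: lv_eq)
  next
    case False
    then have "real (ell n j2) + 1 \<le> real (ell n j1)" using ne by linarith
    then have "L n j2 + w n \<le> L n j1" using wp by (metis distrib_right mult_1 mult_right_mono less_imp_le)
    then show ?thesis by (auto simp: lv_eq)
  qed
qed

lemma L_old: "a < r n \<Longrightarrow> t < h n \<Longrightarrow> L (Suc n) (off n a + t) = L n t + real a * w (Suc n)"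
proof -
  assume a: "a < r n" "t < h n"
  have wn: "w n = real (r n) * w (Suc n)" using rpos[of n] by (simp add: w_Suc)
  have "ell (Suc n) (off n a + t) = ell n t * r n + a" by (rule ell_old[OF a])
  then have "L (Suc n) (off n a + t) = real (ell n t * r n + a) * w (Suc n)" by (simp only:)
  then show ?thesis by (simp add: wn algebra_simps)
qed

lemma wSuc_le: "real (Suc a) * w (Suc n) \<le> w n" if "a < r n"
proof -
  have wn: "w n = real (r n) * w (Suc n)" using rpos[of n] by (simp add: w_Suc)
  show ?thesis unfolding wn using that w_pos[of "Suc n"] by (intro mult_right_mono) auto
qed

lemma lv_old_sub: "a < r n \<Longrightarrow> t < h n \<Longrightarrow> lv (Suc n) (off n a + t) \<subseteq> lv n t"
proof -
  assume a: "a < r n" "t < h n"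
  have "real a * w (Suc n) \<ge> 0" using w_pos[of "Suc n"] by simp
  moreover have "real a * w (Suc n) + w (Suc n) \<le> w n" using wSuc_le[OF a(1)] by (simp add: algebra_simps)
  ultimately show ?thesis using a by (auto simp: lv_eq L_old)
qed

lemma lv_cover: "x \<in> lv n t \<Longrightarrow> \<exists>a<r n. x \<in> lv (Suc n) (off n a + t)" if "t < h n"
proof -
  assume x: "x \<in> lv n t"
  define a where "a = nat \<lfloor>(x - L n t) / w (Suc n)\<rfloor>"
  have wp: "0 < w (Suc n)" by (rule w_pos)
  have wn: "w n = real (r n) * w (Suc n)" using rpos[of n] by (simp add: w_Suc)
  have x0: "0 \<le> x - L n t" "x - L n t < real (r n) * w (Suc n)" using x by (auto simp: lv_eq wn)
  have q0: "0 \<le> (x - L n t) / w (Suc n)" using x0 wp by simp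
  have q1: "(x - L n t) / w (Suc n) < real (r n)" using x0 wp by (simp add: divide_less_eq)
  have fa: "real a = of_int \<lfloor>(x - L n t) / w (Suc n)\<rfloor>" using q0 by (simp add: a_def)
  have a1: "real a \<le> (x - L n t) / w (Suc n)" "(x - L n t) / w (Suc n) < real a + 1"
    using fa by linarith+
  have "a < r n" using a1 q1 by linarith
  moreover have "x \<in> lv (Suc n) (off n a + t)"
  proof -
    have "real a * w (Suc n) \<le> x - L n t" using a1(1) wp by (simp add: le_divide_eq)
    moreover have "x - L n t < (real a + 1) * w (Suc n)" using a1(2) wp by (simp add: divide_less_eq)
    moreover have "L (Suc n) (off n a + t) = L n t + real a * w (Suc n)" using L_old \<open>a < r n\<close> that by blast
    ultimately show ?thesis unfolding lv_eq by (auto simp: algebra_simps)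
  qed
  ultimately show ?thesis by blast
qed

definition C :: "nat \<Rightarrow> real set" where "C n = (\<Union>j<h n. lv n j)"
definition pos :: "nat \<Rightarrow> real \<Rightarrow> nat" where "pos n x = (THE j. j < h n \<and> x \<in> lv n j)"

lemma pos_eq: "j < h n \<Longrightarrow> x \<in> lv n j \<Longrightarrow> pos n x = j"
  unfolding pos_def using lv_disj by (intro the_equality) blast+

lemma posC: "x \<in> C n \<Longrightarrow> pos n x < h n \<and> x \<in> lv n (pos n x)"
  unfolding C_def using pos_eq by auto

lemma C_step: "x \<in> C n \<Longrightarrow> \<exists>a<r n. pos (Suc n) x = off n a + pos n x \<and> x \<in> C (Suc n)"
proof -
  assume x: "x \<in> C n"
  from posC[OF x] obtain a where a: "a < r n" "x \<in> lv (Suc n) (off n a + pos n x)"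
    using lv_cover by blast
  have b: "off n a + pos n x < h (Suc n)" using off_top'[OF a(1)] posC[OF x] by simp
  show ?thesis using a b pos_eq[OF b a(2)] by (auto simp: C_def)
qed

lemma C_mono: "n \<le> m \<Longrightarrow> C n \<subseteq> C m"
  by (induction m rule: dec_induct) (use C_step in blast)+

lemma nested: "n \<le> m \<Longrightarrow> x \<in> C n \<Longrightarrow> lv m (pos m x) \<subseteq> lv n (pos n x)"
proof (induction m rule: dec_induct)
  case (step m)
  have xm: "x \<in> C m" using C_mono step by blast
  obtain a where a: "a < r m" "pos (Suc m) x = off m a + pos m x" using C_step[OF xm] by blast
  show ?case using lv_old_sub[OF a(1) conjunct1[OF posC[OF xm]]] a(2) step by simp
qed simp

lemma shift:
  assumes "n \<le> m" "x \<in> C n" "pos n x + i < h n"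
  shows "pos m x + i < h m \<and> L m (pos m x + i) - L m (pos m x) = L n (pos n x + i) - L n (pos n x)"
  using assms(1)
proof (induction m rule: dec_induct)
  case (step m)
  have xm: "x \<in> C m" using C_mono step assms by blast
  obtain a where a: "a < r m" "pos (Suc m) x = off m a + pos m x" using C_step[OF xm] by blast
  have p: "pos m x < h m" using posC[OF xm] by simp
  have b: "off m a + (pos m x + i) < h (Suc m)" using off_top'[OF a(1)] step(3) by simp
  show ?case using b step(3) a p by (simp add: L_old add.assoc)
qed (use assms in simp)

abbreviation "T \<equiv> cs_T r s"

lemma T_eq:
  assumes x: "x \<in> C n" and j: "Suc (pos n x) < h n"
  shows "T x = x - L n (pos n x) + L n (Suc (pos n x))"
proof -
  let ?P = "\<lambda>y. \<exists>n j. Suc j < h n \<and> x \<in> lv n j \<and> y = x - cs_lev r s n j + cs_lev r s n (Suc j)"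
  have ex: "\<exists>n j. Suc j < h n \<and> x \<in> lv n j" using x j posC[OF x] by blast
  have all: "y = x - L n (pos n x) + L n (Suc (pos n x))" if "?P y" for y
  proof -
    from that obtain n' j' where nj: "Suc j' < h n'" "x \<in> lv n' j'"
      "y = x - cs_lev r s n' j' + cs_lev r s n' (Suc j')" by blast
    have x': "x \<in> C n'" using nj by (auto simp: C_def)
    have pj: "pos n' x = j'" using pos_eq nj by simp
    define m where "m = max n n'"
    have s1: "L m (pos m x + 1) - L m (pos m x) = L n (pos n x + 1) - L n (pos n x)"
      using shift[of n m x 1] x j by (simp add: m_def)
    have s2: "L m (pos m x + 1) - L m (pos m x) = L n' (pos n' x + 1) - L n' (pos n' x)"
      using shift[of n' m x 1] x' nj pj by (simp add: m_def)
    show ?thesis using nj s1 s2 pj by (simp add: lev_eq)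
  qed
  have "T x = (SOME y. ?P y)" using ex unfolding cs_T_def by simp
  also have "\<dots> = x - L n (pos n x) + L n (Suc (pos n x))"
  proof (rule someI2[of ?P])
    show "?P (x - L n (pos n x) + L n (Suc (pos n x)))"
      using x j posC[OF x] by (intro exI[of _ n] exI[of _ "pos n x"]) (simp add: lev_eq)
  qed (use all in blast)
  finally show ?thesis .
qed

lemma Tk_eq:
  assumes x: "x \<in> C n" and j: "pos n x + k < h n"
  shows "(T ^^ k) x = x - L n (pos n x) + L n (pos n x + k) \<and> (T ^^ k) x \<in> lv n (pos n x + k)"
  using j
proof (induction k)
  case 0 then show ?case using posC[OF x] by simp
next
  case (Suc k)
  let ?y = "(T ^^ k) x"
  have IH: "?y = x - L n (pos n x) + L n (pos n x + k)" "?y \<in> lv n (pos n x + k)" using Suc by auto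
  have yC: "?y \<in> C n" using IH(2) Suc.prems by (auto simp: C_def)
  have py: "pos n ?y = pos n x + k" using pos_eq IH(2) Suc.prems by simp
  have "T ?y = ?y - L n (pos n ?y) + L n (Suc (pos n ?y))" using T_eq[OF yC] py Suc.prems by simp
  then have e: "(T ^^ Suc k) x = x - L n (pos n x) + L n (pos n x + Suc k)" using IH(1) py by simp
  have "x - L n (pos n x) \<in> {0..<w n}" using posC[OF x] by (auto simp: lv_eq)
  then have "(T ^^ Suc k) x \<in> lv n (pos n x + Suc k)" unfolding e lv_eq by auto
  with e show ?case by blast
qed

lemma G_mono: "x \<in> C m \<Longrightarrow> pos m x + k < h m \<Longrightarrow> x \<in> C (Suc m) \<and> pos (Suc m) x + k < h (Suc m)"
proof -
  assume a: "x \<in> C m" "pos m x + k < h m"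
  obtain b where b: "b < r m" "pos (Suc m) x = off m b + pos m x" "x \<in> C (Suc m)" using C_step[OF a(1)] by blast
  show ?thesis using b a off_top'[OF b(1)] by simp
qed

end

lemma emeasure_translation_real: "emeasure lebesgue ((+) c ` S) = emeasure lebesgue (S :: real set)"
proof -
  have "(+) c ` S = (\<lambda>x. 1 *\<^sub>R x + c) ` S" by (auto simp: add.commute image_iff)
  then show ?thesis using emeasure_lebesgue_affine[of 1 c S] by simp
qed

lemma Ico_em: "a \<le> b \<Longrightarrow> emeasure lebesgue {a..<b::real} = ennreal (b - a)" by (simp add: emeasure_completion)
lemma Ico_m: "a \<le> b \<Longrightarrow> measure lebesgue {a..<b::real} = b - a" by (simp add: measure_completion)

locale cs1 = cs0 +
  assumes good: "\<And>x k. x \<in> cs_space r s \<Longrightarrow> \<exists>m. x \<in> C m \<and> pos m x + k < h m"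
begin

abbreviation "X \<equiv> cs_space r s"

lemma X_eq: "X = (\<Union>n. C n)" by (simp add: cs_space_def C_def)

lemma lv_sets[simp]: "lv n j \<in> sets lebesgue" by (simp add: lv_eq)
lemma lv_meas: "emeasure lebesgue (lv n j) = ennreal (w n)" using w_pos[of n] by (simp add: lv_eq Ico_em)
lemma lv_measure: "measure lebesgue (lv n j) = w n" using w_pos[of n] by (simp add: lv_eq Ico_m)
lemma C_sets[simp]: "C n \<in> sets lebesgue" by (auto simp: C_def)

lemma img:
  assumes E: "E \<in> sets lebesgue" "E \<subseteq> X"
  shows "(T ^^ k) ` E \<in> sets lebesgue \<and> emeasure lebesgue ((T ^^ k) ` E) \<le> emeasure lebesgue E"
proof -
  define G where "G m = {x \<in> C m. pos m x + k < h m}" for m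
  define J where "J m = {j. j < h m \<and> j + k < h m}" for m
  define F where "F m = (T ^^ k) ` (E \<inter> G m)" for m
  have finJ: "finite (J m)" for m unfolding J_def by auto
  have Feq: "F m = (\<Union>j\<in>J m. (+) (L m (j + k) - L m j) ` (E \<inter> lv m j))" for m
  proof
    show "F m \<subseteq> (\<Union>j\<in>J m. (+) (L m (j + k) - L m j) ` (E \<inter> lv m j))"
    proof
      fix y assume "y \<in> F m"
      then obtain x where x: "x \<in> E" "x \<in> C m" "pos m x + k < h m" "y = (T ^^ k) x"
        unfolding F_def G_def by blast
      have "y = (L m (pos m x + k) - L m (pos m x)) + x" using Tk_eq[OF x(2,3)] x(4) by simp
      moreover have "pos m x \<in> J m" "x \<in> lv m (pos m x)" using x posC[OF x(2)] by (auto simp: J_def)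
      ultimately show "y \<in> (\<Union>j\<in>J m. (+) (L m (j + k) - L m j) ` (E \<inter> lv m j))" using x(1) by blast
    qed
    show "(\<Union>j\<in>J m. (+) (L m (j + k) - L m j) ` (E \<inter> lv m j)) \<subseteq> F m"
    proof
      fix y assume "y \<in> (\<Union>j\<in>J m. (+) (L m (j + k) - L m j) ` (E \<inter> lv m j))"
      then obtain j x where jx: "j \<in> J m" "x \<in> E" "x \<in> lv m j" "y = (L m (j + k) - L m j) + x" by blast
      have xC: "x \<in> C m" using jx by (auto simp: C_def J_def)
      have pj: "pos m x = j" using pos_eq jx by (simp add: J_def)
      have "y = (T ^^ k) x" using Tk_eq[OF xC] pj jx by (simp add: J_def)
      moreover have "x \<in> E \<inter> G m" using jx xC pj by (simp add: G_def J_def)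
      ultimately show "y \<in> F m" unfolding F_def by blast
    qed
  qed
  have Fs: "F m \<in> sets lebesgue" for m
    unfolding Feq using finJ E(1) by (intro sets.finite_UN lebesgue_sets_translation) auto
  have Fm: "emeasure lebesgue (F m) \<le> emeasure lebesgue E" for m
  proof -
    have "emeasure lebesgue (F m) \<le> (\<Sum>j\<in>J m. emeasure lebesgue ((+) (L m (j + k) - L m j) ` (E \<inter> lv m j)))"
      unfolding Feq using finJ E(1) by (intro emeasure_subadditive_finite) (auto intro!: lebesgue_sets_translation)
    also have "\<dots> = (\<Sum>j\<in>J m. emeasure lebesgue (E \<inter> lv m j))"
      by (simp add: emeasure_translation_real)
    also have "\<dots> = emeasure lebesgue (\<Union>j\<in>J m. E \<inter> lv m j)"
      using finJ E(1) by (intro sum_emeasure) (auto simp: disjoint_family_on_def J_def dest: lv_disj)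
    also have "\<dots> \<le> emeasure lebesgue E"
      using E(1) finJ by (intro emeasure_mono) auto
    finally show ?thesis .
  qed
  have inc: "incseq F"
  proof (rule incseq_SucI)
    fix m show "F m \<subseteq> F (Suc m)" unfolding F_def G_def using G_mono by blast
  qed
  have U: "(T ^^ k) ` E = (\<Union>m. F m)"
  proof
    show "(T ^^ k) ` E \<subseteq> (\<Union>m. F m)"
    proof
      fix y assume "y \<in> (T ^^ k) ` E"
      then obtain x where x: "x \<in> E" "y = (T ^^ k) x" by blast
      obtain m where "x \<in> C m" "pos m x + k < h m" using good[of x k] x E(2) by blast
      then show "y \<in> (\<Union>m. F m)" using x unfolding F_def G_def by blast
    qed
  qed (auto simp: F_def)
  have "emeasure lebesgue (\<Union>m. F m) = (SUP m. emeasure lebesgue (F m))"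
    using inc Fs by (intro SUP_emeasure_incseq[symmetric]) auto
  also have "\<dots> \<le> emeasure lebesgue E" using Fm by (intro SUP_least) auto
  finally show ?thesis unfolding U using Fs by auto
qed

lemma good_mono: "x \<in> C m \<Longrightarrow> pos m x + k < h m \<Longrightarrow> m \<le> m' \<Longrightarrow> x \<in> C m' \<and> pos m' x + k < h m'"
proof -
  assume a: "x \<in> C m" "pos m x + k < h m" "m \<le> m'"
  show ?thesis using a(3) by (induction m' rule: dec_induct) (use a G_mono in blast)+
qed

lemma h_le_Suc: "h n \<le> h (Suc n)" using off_top'[of 0 n] rpos[of n] by simp

lemma find_step: assumes "n \<le> m" "\<not> P n" shows "P m \<Longrightarrow> \<exists>N. n \<le> N \<and> N < m \<and> \<not> P N \<and> P (Suc N)"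
  using assms(1)
proof (induction m rule: dec_induct)
  case base then show ?case using assms by simp
next
  case (step m)
  show ?case
  proof (cases "P m")
    case True then show ?thesis using step by (metis less_Suc_eq)
  next
    case False then show ?thesis using step by blast
  qed
qed

lemma core_point:
  assumes x: "x \<in> C n" and y: "(T ^^ k) x \<in> C n" and k: "h (Suc n) \<le> k"
  shows "\<exists>N a b e a' b' e'. n < N \<and> k < h (Suc N) \<and> a < r N \<and> b < r N \<and> a \<noteq> b \<and> \<bar>e\<bar> < int (h N) \<and>
     int k = int (off N b) - int (off N a) + e \<and>
     a' < r (N - 1) \<and> b' < r (N - 1) \<and> \<bar>e'\<bar> < int (h (N - 1)) \<and>
     e = int (off (N - 1) b') - int (off (N - 1) a') + e' \<and>
     x \<in> lv (Suc N) (off N a + pos N x) \<and> pos N x < h N \<and> lv N (pos N x) \<subseteq> C n"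
proof -
  have xX: "x \<in> X" using x X_eq by blast
  obtain m0 where m0: "x \<in> C m0" "pos m0 x + k < h m0" using good[OF xX] by blast
  define m where "m = max m0 (Suc n)"
  have m: "x \<in> C m" "pos m x + k < h m" "Suc n \<le> m" using good_mono[OF m0, of m] by (auto simp: m_def)
  let ?y = "(T ^^ k) x"
  have yl: "?y \<in> lv m (pos m x + k)" using Tk_eq[OF m(1,2)] by blast
  have pym: "pos m ?y = pos m x + k" using pos_eq[OF m(2) yl] .
  define D where "D i = int (pos i ?y) - int (pos i x)" for i
  have inC: "x \<in> C i \<and> ?y \<in> C i" if "n \<le> i" for i using C_mono[OF that] x y by blast
  have Dn: "D n \<noteq> int k"
  proof -
    have "pos n ?y < h n" "pos n x < h n" using posC x y by auto
    moreover have "h n \<le> k" using h_le_Suc[of n] k by simp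
    ultimately show ?thesis unfolding D_def by linarith
  qed
  have Dm: "D m = int k" using pym by (simp add: D_def)
  obtain N where N: "n \<le> N" "N < m" "D N \<noteq> int k" "D (Suc N) = int k"
    using find_step[of n m "\<lambda>i. D i = int k"] Dn Dm m(3) by auto
  have xN: "x \<in> C N" and yN: "?y \<in> C N" using inC N(1) by auto
  obtain a where a: "a < r N" "pos (Suc N) x = off N a + pos N x" using C_step[OF xN] by blast
  obtain b where b: "b < r N" "pos (Suc N) ?y = off N b + pos N ?y" using C_step[OF yN] by blast
  have pN: "pos N x < h N" "pos N ?y < h N" using posC xN yN by auto
  have ke: "int k = int (off N b) - int (off N a) + D N" using N(4) a b by (simp add: D_def)
  have ab: "a \<noteq> b" using ke N(3) by auto
  have eN: "\<bar>D N\<bar> < int (h N)" using pN unfolding D_def by linarith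
  have kN: "k < h (Suc N)"
  proof -
    have "pos (Suc N) ?y < h (Suc N)" using posC inC N(1) by (meson le_SucI)
    then show ?thesis using N(4) unfolding D_def by linarith
  qed
  have nN: "n < N"
  proof (rule ccontr)
    assume "\<not> n < N" then have "N = n" using N(1) by simp
    then show False using kN k by simp
  qed
  obtain N' where N': "N = Suc N'" using nN by (cases N) auto
  have xN': "x \<in> C N'" and yN': "?y \<in> C N'" using inC nN N' by auto
  obtain a' where a': "a' < r N'" "pos (Suc N') x = off N' a' + pos N' x" using C_step[OF xN'] by blast
  obtain b' where b': "b' < r N'" "pos (Suc N') ?y = off N' b' + pos N' ?y" using C_step[OF yN'] by blast
  have pN': "pos N' x < h N'" "pos N' ?y < h N'" using posC xN' yN' by auto
  have e': "D N = int (off N' b') - int (off N' a') + D N'" using a' b' N' by (simp add: D_def)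
  have eN': "\<bar>D N'\<bar> < int (h N')" using pN' unfolding D_def by linarith
  have xl: "x \<in> lv (Suc N) (off N a + pos N x)" using posC[of x "Suc N"] inC N(1) a(2) by (metis le_SucI)
  have sub: "lv N (pos N x) \<subseteq> C n"
    using nested[OF N(1) x] posC[OF x] by (auto simp: C_def)
  show ?thesis
    apply (rule exI[of _ N], rule exI[of _ a], rule exI[of _ b], rule exI[of _ "D N"],
           rule exI[of _ a'], rule exI[of _ b'], rule exI[of _ "D N'"])
    using nN kN a b ab eN ke a' b' eN' e' xl pN sub N' by simp
qed

lemma measure_le_em: "emeasure lebesgue A \<le> emeasure lebesgue B \<Longrightarrow> emeasure lebesgue B < \<infinity> \<Longrightarrow>
   measure lebesgue A \<le> measure lebesgue B"
  unfolding measure_def by (intro enn2real_mono) auto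

lemma C_measure: "measure lebesgue (C n) \<le> real (h n) * w n"
proof -
  have "measure lebesgue (C n) \<le> (\<Sum>j<h n. measure lebesgue (lv n j))"
    unfolding C_def by (intro measure_UNION_le) auto
  also have "\<dots> = real (h n) * w n" by (simp add: lv_measure)
  finally show ?thesis .
qed

lemma C_emeasure: "emeasure lebesgue (C n) < \<infinity>"
proof -
  have "emeasure lebesgue (C n) \<le> (\<Sum>j<h n. emeasure lebesgue (lv n j))"
    unfolding C_def by (intro emeasure_subadditive_finite) auto
  also have "\<dots> < \<infinity>" by (simp add: lv_meas ennreal_mult_less_top of_nat_less_top)
  finally show ?thesis .
qed

lemma S_measure:
  assumes "a < r N"
  shows "measure lebesgue (\<Union>J\<in>{J. J < h N \<and> lv N J \<subseteq> C n}. lv (Suc N) (off N a + J))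
       \<le> real (h n) * w n / real (r N)"
proof -
  let ?D = "{J. J < h N \<and> lv N J \<subseteq> C n}"
  have fin: "finite ?D" by auto
  have "real (card ?D) * w N = (\<Sum>J\<in>?D. measure lebesgue (lv N J))" by (simp add: lv_measure)
  also have "\<dots> = measure lebesgue (\<Union>J\<in>?D. lv N J)"
    using fin by (intro measure_UNION'[symmetric]) (auto simp: fmeasurable_def lv_meas pairwise_def disjnt_def lv_disj)
  also have "\<dots> \<le> measure lebesgue (C n)"
    using C_emeasure by (intro measure_mono_fmeasurable) (auto simp: fmeasurable_def)
  also have "\<dots> \<le> real (h n) * w n" by (rule C_measure)
  finally have cD: "real (card ?D) * w N \<le> real (h n) * w n" .
  have "measure lebesgue (\<Union>J\<in>?D. lv (Suc N) (off N a + J)) \<le> (\<Sum>J\<in>?D. measure lebesgue (lv (Suc N) (off N a + J)))"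
    using fin by (intro measure_UNION_le) auto
  also have "\<dots> = real (card ?D) * w N / real (r N)" by (simp add: lv_measure w_Suc)
  also have "\<dots> \<le> real (h n) * w n / real (r N)" using cD rpos[of N] by (simp add: divide_right_mono)
  finally show ?thesis .
qed

lemma core_meas:
  assumes k: "h (Suc n) \<le> k" and finV: "finite V"
  and hyp: "\<And>N a b e a' b' e'. n < N \<Longrightarrow> k < h (Suc N) \<Longrightarrow> a < r N \<Longrightarrow> b < r N \<Longrightarrow> a \<noteq> b \<Longrightarrow>
     \<bar>e\<bar> < int (h N) \<Longrightarrow> int k = int (off N b) - int (off N a) + e \<Longrightarrow>
     a' < r (N - 1) \<Longrightarrow> b' < r (N - 1) \<Longrightarrow> \<bar>e'\<bar> < int (h (N - 1)) \<Longrightarrow>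
     e = int (off (N - 1) b') - int (off (N - 1) a') + e' \<Longrightarrow> N \<in> V \<and> a \<in> B N"
  shows "measure lebesgue (C n \<inter> (T ^^ k) ` C n)
     \<le> (\<Sum>N\<in>V. real (card (B N \<inter> {..<r N})) * (real (h n) * w n / real (r N)))"
proof -
  define Des where "Des N = {J. J < h N \<and> lv N J \<subseteq> C n}" for N
  define S where "S N a = (\<Union>J\<in>Des N. lv (Suc N) (off N a + J))" for N a
  define E where "E = (\<Union>N\<in>V. \<Union>a\<in>B N \<inter> {..<r N}. S N a)"
  have finD: "finite (Des N)" for N by (auto simp: Des_def)
  have Ss: "S N a \<in> sets lebesgue" for N a unfolding S_def using finD by auto
  have Es: "E \<in> sets lebesgue" unfolding E_def using finV Ss by auto
  have EC: "E \<subseteq> C n"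
  proof
    fix z assume "z \<in> E"
    then obtain N a J where "a < r N" "J < h N" "lv N J \<subseteq> C n" "z \<in> lv (Suc N) (off N a + J)"
      unfolding E_def S_def Des_def by blast
    then show "z \<in> C n" using lv_old_sub by blast
  qed
  have EX: "E \<subseteq> X" using EC X_eq by blast
  have Efin: "emeasure lebesgue E < \<infinity>"
    using C_emeasure[of n] emeasure_mono[OF EC C_sets[of n]] by (meson le_less_trans)
  have sub: "C n \<inter> (T ^^ k) ` C n \<subseteq> (T ^^ k) ` E"
  proof
    fix y assume "y \<in> C n \<inter> (T ^^ k) ` C n"
    then obtain x where x: "x \<in> C n" "y = (T ^^ k) x" "y \<in> C n" by blast
    obtain N a b e a' b' e' where P: "n < N" "k < h (Suc N)" "a < r N" "b < r N" "a \<noteq> b" "\<bar>e\<bar> < int (h N)"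
      "int k = int (off N b) - int (off N a) + e" "a' < r (N - 1)" "b' < r (N - 1)" "\<bar>e'\<bar> < int (h (N - 1))"
      "e = int (off (N - 1) b') - int (off (N - 1) a') + e'"
      "x \<in> lv (Suc N) (off N a + pos N x)" "pos N x < h N" "lv N (pos N x) \<subseteq> C n"
      using core_point[OF x(1) _ k] x by blast
    have "N \<in> V \<and> a \<in> B N" using hyp[OF P(1-11)] .
    then have "x \<in> E" using P(3,12-14) unfolding E_def S_def Des_def by blast
    then show "y \<in> (T ^^ k) ` E" using x by blast
  qed
  have im: "(T ^^ k) ` E \<in> sets lebesgue" "emeasure lebesgue ((T ^^ k) ` E) \<le> emeasure lebesgue E"
    using img[OF Es EX, of k] by blast+
  have imC: "(T ^^ k) ` C n \<in> sets lebesgue" using img[of "C n" k] X_eq C_sets by blast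
  have "measure lebesgue (C n \<inter> (T ^^ k) ` C n) \<le> measure lebesgue ((T ^^ k) ` E)"
    using sub imC im Efin by (intro measure_mono_fmeasurable) (auto simp: fmeasurable_def le_less_trans)
  also have "\<dots> \<le> measure lebesgue E" using measure_le_em im(2) Efin by blast
  also have "\<dots> \<le> (\<Sum>N\<in>V. measure lebesgue (\<Union>a\<in>B N \<inter> {..<r N}. S N a))"
    unfolding E_def using finV Ss by (intro measure_UNION_le) auto
  also have "\<dots> \<le> (\<Sum>N\<in>V. \<Sum>a\<in>B N \<inter> {..<r N}. measure lebesgue (S N a))"
    using Ss by (intro sum_mono measure_UNION_le) auto
  also have "\<dots> \<le> (\<Sum>N\<in>V. \<Sum>a\<in>B N \<inter> {..<r N}. real (h n) * w n / real (r N))"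
    unfolding S_def Des_def using S_measure by (intro sum_mono) auto
  also have "\<dots> = (\<Sum>N\<in>V. real (card (B N \<inter> {..<r N})) * (real (h n) * w n / real (r N)))" by simp
  finally show ?thesis .
qed

lemma zero_from_core:
  assumes core: "\<And>n. (\<lambda>k. measure lebesgue (C n \<inter> (T ^^ k) ` C n)) \<longlonglongrightarrow> 0"
  shows "zero_type X T"
  unfolding zero_type_def
proof (intro allI impI)
  fix A assume A: "A \<in> sets lebesgue \<and> A \<subseteq> X \<and> emeasure lebesgue A < \<infinity>"
  have As: "A \<in> sets lebesgue" and AX: "A \<subseteq> X" and Af: "emeasure lebesgue A < \<infinity>" using A by auto
  have Cinc: "incseq C" using C_mono by (auto simp: incseq_def)
  have inc: "incseq (\<lambda>n. A \<inter> C n)" using Cinc by (auto simp: incseq_def)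
  have UA: "(\<Union>n. A \<inter> C n) = A" using AX X_eq by blast
  have lim1: "(\<lambda>n. measure lebesgue (A \<inter> C n)) \<longlonglongrightarrow> measure lebesgue A"
  proof -
    have rs: "range (\<lambda>n. A \<inter> C n) \<subseteq> sets lebesgue" using As by auto
    have "emeasure lebesgue (\<Union>n. A \<inter> C n) \<noteq> \<infinity>" unfolding UA using Af by (metis order_less_irrefl)
    from Lim_measure_incseq[OF rs inc this] show ?thesis unfolding UA .
  qed
  have dif: "measure lebesgue (A - C n) = measure lebesgue A - measure lebesgue (A \<inter> C n)" for n
  proof -
    have e: "A - C n = A - (A \<inter> C n)" by blast
    have f: "emeasure lebesgue A \<noteq> \<infinity>" using Af by (metis order_less_irrefl)
    have "measure lebesgue (A - (A \<inter> C n)) = measure lebesgue A - measure lebesgue (A \<inter> C n)"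
      by (rule measure_Diff[OF f As]) (use As in auto)
    then show ?thesis unfolding e .
  qed
  have lim2: "(\<lambda>n. measure lebesgue (A - C n)) \<longlonglongrightarrow> 0"
    unfolding dif using tendsto_diff[OF tendsto_const lim1, of "measure lebesgue A"] by simp
  show "(\<lambda>k. measure lebesgue (A \<inter> (T ^^ k) ` A)) \<longlonglongrightarrow> 0"
  proof (rule LIMSEQ_I)
    fix eps :: real assume eps: "0 < eps"
    obtain n where n: "measure lebesgue (A - C n) < eps / 3"
      using LIMSEQ_D[OF lim2, of "eps / 3"] eps by auto
    obtain K where K: "\<And>k. K \<le> k \<Longrightarrow> measure lebesgue (C n \<inter> (T ^^ k) ` C n) < eps / 3"
      using LIMSEQ_D[OF core[of n], of "eps / 3"] eps by auto
    have D: "A - C n \<in> sets lebesgue" "A - C n \<subseteq> X" using As AX by auto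
    have Df: "emeasure lebesgue (A - C n) < \<infinity>"
      using Af emeasure_mono[of "A - C n" A lebesgue] As by (meson Diff_subset le_less_trans)
    show "\<exists>no. \<forall>k\<ge>no. norm (measure lebesgue (A \<inter> (T ^^ k) ` A) - 0) < eps"
    proof (intro exI allI impI)
      fix k assume k: "K \<le> k"
      have i1: "(T ^^ k) ` (A - C n) \<in> sets lebesgue" "emeasure lebesgue ((T ^^ k) ` (A - C n)) \<le> emeasure lebesgue (A - C n)"
        using img[OF D, of k] by blast+
      have i2: "(T ^^ k) ` C n \<in> sets lebesgue" using img[of "C n" k] X_eq C_sets by blast
      have i3: "(T ^^ k) ` A \<in> sets lebesgue" using img[OF As AX, of k] by blast
      have i1f: "emeasure lebesgue ((T ^^ k) ` (A - C n)) < \<infinity>" using i1 Df by (meson le_less_trans)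
      have cf: "emeasure lebesgue (C n \<inter> (T ^^ k) ` C n) < \<infinity>"
        using C_emeasure[of n] emeasure_mono[of "C n \<inter> (T ^^ k) ` C n" "C n" lebesgue] by (meson Int_lower1 C_sets le_less_trans)
      let ?U = "(C n \<inter> (T ^^ k) ` C n) \<union> (A - C n) \<union> (T ^^ k) ` (A - C n)"
      have sub: "A \<inter> (T ^^ k) ` A \<subseteq> ?U" by blast
      have Us: "?U \<in> sets lebesgue" using i1(1) i2 D(1) C_sets[of n] by (intro sets.Un sets.Int) auto
      have Uf: "emeasure lebesgue ?U < \<infinity>"
      proof -
        have "emeasure lebesgue ?U \<le> emeasure lebesgue ((C n \<inter> (T ^^ k) ` C n) \<union> (A - C n)) + emeasure lebesgue ((T ^^ k) ` (A - C n))"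
          using i1(1) i2 D(1) C_sets[of n] by (intro emeasure_subadditive sets.Un sets.Int) auto
        also have "\<dots> \<le> emeasure lebesgue (C n \<inter> (T ^^ k) ` C n) + emeasure lebesgue (A - C n) + emeasure lebesgue ((T ^^ k) ` (A - C n))"
          using i2 D(1) C_sets[of n] by (intro add_right_mono emeasure_subadditive sets.Int) auto
        also have "\<dots> < \<infinity>" using cf Df i1f by (simp add: ennreal_add_less_top)
        finally show ?thesis .
      qed
      have "measure lebesgue (A \<inter> (T ^^ k) ` A) \<le> measure lebesgue ?U"
        using sub Us Uf As i3 by (intro measure_mono_fmeasurable) (auto simp: fmeasurable_def)
      also have "\<dots> \<le> measure lebesgue ((C n \<inter> (T ^^ k) ` C n) \<union> (A - C n)) + measure lebesgue ((T ^^ k) ` (A - C n))"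
        using i1(1) i2 D(1) C_sets[of n] by (intro measure_Un_le sets.Un sets.Int) auto
      also have "\<dots> \<le> measure lebesgue (C n \<inter> (T ^^ k) ` C n) + measure lebesgue (A - C n) + measure lebesgue ((T ^^ k) ` (A - C n))"
        using i2 D(1) C_sets[of n] by (intro add_right_mono measure_Un_le sets.Int) auto
      also have "measure lebesgue ((T ^^ k) ` (A - C n)) \<le> measure lebesgue (A - C n)"
        using measure_le_em i1(2) Df by blast
      finally have "measure lebesgue (A \<inter> (T ^^ k) ` A) < eps" using n K[OF k] by linarith
      then show "norm (measure lebesgue (A \<inter> (T ^^ k) ` A) - 0) < eps" by simp
    qed
  qed
qed

end

definition tri :: "nat \<Rightarrow> nat" where "tri N = N * (N + 1) div 2"
definition cc :: "nat \<Rightarrow> nat" where "cc N = nat \<lceil>sqrt (real N)\<rceil>"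

lemma tri_Suc: "tri (Suc N) = tri N + Suc N" unfolding tri_def by simp
lemma tri_mono: "N \<le> M \<Longrightarrow> tri N \<le> tri M" unfolding tri_def by (intro div_le_mono mult_le_mono) auto
lemma tri_ge: "N \<le> tri N" unfolding tri_def by (cases N) auto
lemma lt_pow5: "(N::nat) < 5 ^ N"
proof (induction N)
  case (Suc N)
  have "(1::nat) \<le> 5 ^ N" by simp
  then show ?case using Suc by simp
qed simp
lemma le_pow5: "(N::nat) \<le> 5 ^ N" using lt_pow5[of N] by simp

lemma cc_le: "cc N \<le> N"
proof -
  have "sqrt (real N) \<le> real N"
  proof (cases "N = 0")
    case False
    then have "1 \<le> sqrt (real N)" by simp
    then have "sqrt (real N) * 1 \<le> sqrt (real N) * sqrt (real N)" by (intro mult_left_mono) auto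
    then show ?thesis by simp
  qed simp
  then have "\<lceil>sqrt (real N)\<rceil> \<le> int N" by (simp add: ceiling_le_iff)
  then show ?thesis unfolding cc_def by (simp only: nat_le_iff)
qed

lemma cc_pos: "1 \<le> N \<Longrightarrow> 1 \<le> cc N"
proof -
  assume "1 \<le> N"
  then have "0 < sqrt (real N)" by simp
  then have "0 < \<lceil>sqrt (real N)\<rceil>" by linarith
  then have "0 < nat \<lceil>sqrt (real N)\<rceil>" by simp
  then show ?thesis unfolding cc_def by linarith
qed

lemma cc_real: "real (cc N) \<le> sqrt (real N) + 1"
proof -
  have "real_of_int \<lceil>sqrt (real N)\<rceil> \<le> sqrt (real N) + 1" by linarith
  moreover have "0 \<le> \<lceil>sqrt (real N)\<rceil>" using real_sqrt_ge_zero[of "real N"] by linarith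
  ultimately show ?thesis unfolding cc_def by simp
qed

locale cs2 = cs0 +
  assumes r_def: "\<And>n. r n = n + 2"
    and h_def: "\<And>n. cs_height r s n = 5 ^ (n * (n + 1) div 2)"
    and H_def: "\<And>n. cs_H r s n =
        {0} \<union> {j * 5 ^ (n * (n + 1) div 2) | j. 1 \<le> j \<and> j \<le> nat \<lceil>sqrt (real n)\<rceil>}
            \<union> {5 ^ (n * (n + 1) div 2 + i) | i. nat \<lceil>sqrt (real n)\<rceil> \<le> i \<and> i \<le> n}"
begin

lemma h_eq: "h N = 5 ^ tri N" using h_def by (simp add: tri_def)
lemma h_Suc_eq: "h (Suc N) = 5 * 5 ^ (tri N + N)" by (simp add: h_eq tri_Suc)

lemma off_in:
  assumes a: "a < r N"
  shows "(\<exists>j. j \<le> cc N \<and> off N a = j * 5 ^ tri N) \<or> (\<exists>i. cc N \<le> i \<and> i \<le> N \<and> off N a = 5 ^ (tri N + i))"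
proof -
  have "off N a \<in> cs_H r s N"
  proof (cases a)
    case 0 then show ?thesis by (simp add: cs_H_def)
  next
    case (Suc i)
    have "off N a = (\<Sum>k\<le>i. cs_hk r s N k)" using Suc by (simp add: cs_off_def lessThan_Suc_atMost)
    moreover have "i < r N - 1" using a Suc by simp
    ultimately show ?thesis unfolding cs_H_def by blast
  qed
  then show ?thesis unfolding H_def by (auto simp: tri_def cc_def)
qed

lemma off_le: "a < r N \<Longrightarrow> off N a \<le> 5 ^ (tri N + N)"
proof -
  assume a: "a < r N"
  have c: "cc N \<le> 5 ^ N" using cc_le[of N] le_pow5[of N] by linarith
  from off_in[OF a] show ?thesis
  proof
    assume "\<exists>j. j \<le> cc N \<and> off N a = j * 5 ^ tri N"
    then obtain j where j: "j \<le> cc N" "off N a = j * 5 ^ tri N" by blast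
    have "j * 5 ^ tri N \<le> 5 ^ N * 5 ^ tri N" using j c by simp
    then show ?thesis using j by (simp add: power_add mult.commute)
  next
    assume "\<exists>i. cc N \<le> i \<and> i \<le> N \<and> off N a = 5 ^ (tri N + i)"
    then obtain i where "i \<le> N" "off N a = 5 ^ (tri N + i)" by blast
    then show ?thesis by (simp add: power_increasing)
  qed
qed

lemma good2: "x \<in> cs_space r s \<Longrightarrow> \<exists>m. x \<in> C m \<and> pos m x + k < h m"
proof -
  assume "x \<in> cs_space r s"
  then obtain n0 where x0: "x \<in> C n0" by (auto simp: cs_space_def C_def)
  define m where "m = max n0 k"
  have xm: "x \<in> C m" using C_mono[of n0 m] x0 by (auto simp: m_def)
  obtain a where a: "a < r m" "pos (Suc m) x = off m a + pos m x" "x \<in> C (Suc m)" using C_step[OF xm] by blast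
  have "off m a \<le> 5 ^ (tri m + m)" by (rule off_le[OF a(1)])
  moreover have "pos m x < 5 ^ (tri m + m)"
  proof -
    have "pos m x < 5 ^ tri m" using posC[OF xm] h_eq[of m] by simp
    also have "(5::nat) ^ tri m \<le> 5 ^ (tri m + m)" by (rule power_increasing) auto
    finally show ?thesis .
  qed
  moreover have "k < 5 ^ (tri m + m)"
  proof -
    have "k \<le> m" by (simp add: m_def)
    also have "m < 5 ^ m" by (rule lt_pow5)
    also have "(5::nat) ^ m \<le> 5 ^ (tri m + m)" by (rule power_increasing) auto
    finally show ?thesis .
  qed
  ultimately have "pos (Suc m) x + k < h (Suc m)" using a(2) h_Suc_eq[of m] by simp
  then show ?thesis using a(3) by blast
qed

end

sublocale cs2 \<subseteq> cs1
  by unfold_locales (rule good2)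




lemma pow5_mod: "1 \<le> t \<Longrightarrow> ((5::nat) ^ t - 1) mod 5 = 4"
proof -
  assume t: "1 \<le> t"
  then obtain u where u: "t = Suc u" by (cases t) auto
  have x: "(1::nat) \<le> 5 ^ u" by simp
  have "(5::nat) ^ t - 1 = 5 * 5 ^ u - 1" using u by simp
  also have "\<dots> = 5 * (5 ^ u - 1) + 4" using x by linarith
  finally have "(5::nat) ^ t - 1 = 5 * (5 ^ u - 1) + 4" .
  then show ?thesis by simp
qed

lemma pow_split: "u \<le> u' \<Longrightarrow> (5::nat) ^ u' = 5 ^ u * 5 ^ (u' - u)"
  by (metis le_add_diff_inverse power_add)

lemma pow5_diff_ne:
  assumes "u < u'" "v < v'" "u < v"
  shows "(5::nat) ^ u' - 5 ^ u \<noteq> 5 ^ v' - 5 ^ v"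
proof
  assume eq: "(5::nat) ^ u' - 5 ^ u = 5 ^ v' - 5 ^ v"
  have e1: "(5::nat) ^ u' - 5 ^ u = 5 ^ u * (5 ^ (u' - u) - 1)"
    using pow_split[of u u'] assms by (simp add: diff_mult_distrib2)
  have e2: "(5::nat) ^ v' - 5 ^ v = 5 ^ u * (5 * (5 ^ (v - Suc u) * (5 ^ (v' - v) - 1)))"
  proof -
    have "(5::nat) ^ v' - 5 ^ v = 5 ^ v * (5 ^ (v' - v) - 1)"
      using pow_split[of v v'] assms by (simp add: diff_mult_distrib2)
    moreover have "(5::nat) ^ v = 5 ^ u * (5 * 5 ^ (v - Suc u))"
      using pow_split[of "Suc u" v] assms by simp
    ultimately show ?thesis by (simp add: mult.assoc)
  qed
  have "(5::nat) ^ (u' - u) - 1 = 5 * (5 ^ (v - Suc u) * (5 ^ (v' - v) - 1))"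
    using eq e1 e2 by simp
  then have "((5::nat) ^ (u' - u) - 1) mod 5 = 0" by simp
  with pow5_mod[of "u' - u"] assms show False by simp
qed

lemma pow5_diff_inj:
  "x < x' \<Longrightarrow> y < y' \<Longrightarrow> (5::nat) ^ x' - 5 ^ x = 5 ^ y' - 5 ^ y \<Longrightarrow> x = y"
  using pow5_diff_ne[of x x' y y'] pow5_diff_ne[of y y' x x'] by (cases x y rule: linorder_cases) auto

context cs2
begin

definition Bad :: "nat \<Rightarrow> nat \<Rightarrow> nat set" where
  "Bad N k = {a. a < r N \<and> (\<exists>b<r N. a \<noteq> b \<and> (\<exists>e::int. \<bar>e\<bar> < int (h N) \<and> int k = int (off N b) - int (off N a) + e))}"

lemma bad_lt:
  assumes "a < r N" "b < r N" "a \<noteq> b" "\<bar>e\<bar> < int (h N)" "int k = int (off N b) - int (off N a) + e"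
  shows "a < b"
proof (rule ccontr)
  assume "\<not> a < b"
  then have "b < a" using assms(3) by simp
  then have "off N b + h N \<le> off N a" by (rule off_gap)
  then show False using assms(4,5) by linarith
qed

lemma geo_b:
  assumes a: "a \<in> Bad N k" and i: "cc N \<le> i" "off N a = 5 ^ (tri N + i)"
  shows "\<exists>b i' e. b < r N \<and> i < i' \<and> off N b = 5 ^ (tri N + i') \<and> \<bar>e\<bar> < int (h N) \<and>
     int k = int (off N b) - int (off N a) + e"
proof -
  obtain b e where be: "a < r N" "b < r N" "a \<noteq> b" "\<bar>e\<bar> < int (h N)" "int k = int (off N b) - int (off N a) + e"
    using a unfolding Bad_def by blast
  have ab: "a < b" using bad_lt[OF be] .
  have lt: "off N a < off N b" using off_strict[OF ab] .
  from off_in[OF be(2)] show ?thesis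
  proof
    assume "\<exists>j. j \<le> cc N \<and> off N b = j * 5 ^ tri N"
    then obtain j where j: "j \<le> cc N" "off N b = j * 5 ^ tri N" by blast
    have "j * 5 ^ tri N < 5 ^ cc N * 5 ^ tri N" using j(1) lt_pow5[of "cc N"] by simp
    also have "\<dots> = 5 ^ (tri N + cc N)" by (simp add: power_add)
    also have "\<dots> \<le> 5 ^ (tri N + i)" using i by (intro power_increasing) auto
    finally show ?thesis using j lt i by simp
  next
    assume "\<exists>i'. cc N \<le> i' \<and> i' \<le> N \<and> off N b = 5 ^ (tri N + i')"
    then obtain i' where i': "off N b = 5 ^ (tri N + i')" by blast
    have "(5::nat) ^ (tri N + i) < 5 ^ (tri N + i')" using lt i i' by simp
    then have "i < i'" by (simp add: power_strict_increasing_iff)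
    then show ?thesis using be i' by blast
  qed
qed

lemma bad_card:
  assumes N: "1 \<le> N"
  shows "card (Bad N k \<inter> {..<r N}) \<le> cc N + 2"
proof -
  let ?B = "Bad N k \<inter> {..<r N}"
  define A1 where "A1 = {a \<in> ?B. \<exists>j. j \<le> cc N \<and> off N a = j * 5 ^ tri N}"
  define A2 where "A2 = {a \<in> ?B. \<exists>i. cc N \<le> i \<and> i \<le> N \<and> off N a = 5 ^ (tri N + i)}"
  have sub: "?B \<subseteq> A1 \<union> A2"
  proof
    fix a assume a: "a \<in> ?B"
    then have "a < r N" by simp
    from off_in[OF this] show "a \<in> A1 \<union> A2"
    proof
      assume "\<exists>j. j \<le> cc N \<and> off N a = j * 5 ^ tri N"
      then have "a \<in> A1" using a unfolding A1_def by blast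
      then show ?thesis by simp
    next
      assume "\<exists>i. cc N \<le> i \<and> i \<le> N \<and> off N a = 5 ^ (tri N + i)"
      then have "a \<in> A2" using a unfolding A2_def by blast
      then show ?thesis by simp
    qed
  qed
  have fin: "finite A1" "finite A2" unfolding A1_def A2_def by auto
  have c1: "card A1 \<le> cc N + 1"
  proof -
    have "card A1 \<le> card ((\<lambda>j. j * 5 ^ tri N) ` {..cc N})"
    proof (rule card_inj_on_le)
      show "inj_on (off N) A1" using off_inj by (auto simp: inj_on_def)
      show "off N ` A1 \<subseteq> (\<lambda>j. j * 5 ^ tri N) ` {..cc N}" unfolding A1_def by auto
    qed auto
    also have "\<dots> \<le> card {..cc N}" by (rule card_image_le) auto
    finally show ?thesis by simp
  qed
  have c2: "\<forall>a1\<in>A2. \<forall>a2\<in>A2. a1 = a2"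
  proof (intro ballI)
    fix a1 a2 assume a: "a1 \<in> A2" "a2 \<in> A2"
    obtain i1 where i1: "cc N \<le> i1" "off N a1 = 5 ^ (tri N + i1)" using a(1) unfolding A2_def by auto
    obtain i2 where i2: "cc N \<le> i2" "off N a2 = 5 ^ (tri N + i2)" using a(2) unfolding A2_def by auto
    have ab1: "a1 \<in> Bad N k" "a2 \<in> Bad N k" using a unfolding A2_def by auto
    obtain b1 i1' e1 where b1: "b1 < r N" "i1 < i1'" "off N b1 = 5 ^ (tri N + i1')" "\<bar>e1\<bar> < int (h N)"
      "int k = int (off N b1) - int (off N a1) + e1" using geo_b[OF ab1(1) i1] by blast
    obtain b2 i2' e2 where b2: "b2 < r N" "i2 < i2'" "off N b2 = 5 ^ (tri N + i2')" "\<bar>e2\<bar> < int (h N)"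
      "int k = int (off N b2) - int (off N a2) + e2" using geo_b[OF ab1(2) i2] by blast
    have c1: "1 \<le> cc N" by (rule cc_pos[OF N])
    define P where "P = (5::nat) ^ tri N"
    define m1 where "m1 = (5::nat) ^ (i1' - 1) - 5 ^ (i1 - 1)"
    define m2 where "m2 = (5::nat) ^ (i2' - 1) - 5 ^ (i2 - 1)"
    have pw: "(5::nat) ^ (tri N + x) = P * 5 * 5 ^ (x - 1)" if "1 \<le> x" for x
      using that unfolding P_def by (cases x) (auto simp: power_add)
    have d1: "int (off N b1) - int (off N a1) = int (P * 5) * int m1"
    proof -
      have le: "(5::nat) ^ (i1 - 1) \<le> 5 ^ (i1' - 1)" using b1(2) by (intro power_increasing) auto
      have ob: "off N b1 = P * 5 * 5 ^ (i1' - 1)" using b1(3) pw[of i1'] b1(2) c1 i1 by simp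
      have oa: "off N a1 = P * 5 * 5 ^ (i1 - 1)" using i1(2) pw[of i1] c1 i1(1) by simp
      have "int m1 = int (5 ^ (i1' - 1)) - int (5 ^ (i1 - 1))" unfolding m1_def using le by (simp add: of_nat_diff)
      then show ?thesis unfolding ob oa by (simp add: right_diff_distrib)
    qed
    have d2: "int (off N b2) - int (off N a2) = int (P * 5) * int m2"
    proof -
      have le: "(5::nat) ^ (i2 - 1) \<le> 5 ^ (i2' - 1)" using b2(2) by (intro power_increasing) auto
      have ob: "off N b2 = P * 5 * 5 ^ (i2' - 1)" using b2(3) pw[of i2'] b2(2) c1 i2 by simp
      have oa: "off N a2 = P * 5 * 5 ^ (i2 - 1)" using i2(2) pw[of i2] c1 i2(1) by simp
      have "int m2 = int (5 ^ (i2' - 1)) - int (5 ^ (i2 - 1))" unfolding m2_def using le by (simp add: of_nat_diff)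
      then show ?thesis unfolding ob oa by (simp add: right_diff_distrib)
    qed
    have hP: "int (h N) = int P" by (simp add: h_eq P_def)
    have dd: "int (P * 5) * int m1 - int (P * 5) * int m2 = e2 - e1" using b1(5) b2(5) d1 d2 by linarith
    have "\<bar>int (P * 5) * (int m1 - int m2)\<bar> < 2 * int P"
      unfolding right_diff_distrib dd using b1(4) b2(4) hP by linarith
    have P0: "0 < P" unfolding P_def by simp
    have mm: "int m1 = int m2"
    proof (rule ccontr)
      assume "int m1 \<noteq> int m2"
      then have g1: "1 \<le> \<bar>int m1 - int m2\<bar>" by linarith
      have "\<bar>int (P * 5) * (int m1 - int m2)\<bar> = int (P * 5) * \<bar>int m1 - int m2\<bar>" by (simp add: abs_mult)
      also have "\<dots> \<ge> int (P * 5) * 1" using g1 by (intro mult_left_mono) auto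
      finally have "int (P * 5) \<le> \<bar>int (P * 5) * (int m1 - int m2)\<bar>" by simp
      with \<open>\<bar>int (P * 5) * (int m1 - int m2)\<bar> < 2 * int P\<close> P0 show False by simp
    qed
    then have "m1 = m2" by simp
    then have "(5::nat) ^ (i1' - 1) - 5 ^ (i1 - 1) = 5 ^ (i2' - 1) - 5 ^ (i2 - 1)" unfolding m1_def m2_def .
    then have "i1 - 1 = i2 - 1"
      by (rule pow5_diff_inj[rotated 2]) (use b1(2) b2(2) c1 i1(1) i2(1) in linarith)+
    then have "i1 = i2" using i1 i2 c1 by simp
    then have "off N a1 = off N a2" using i1 i2 by simp
    then show "a1 = a2" by (rule off_inj)
  qed
  have c2: "card A2 \<le> 1" using card_le_Suc0_iff_eq[OF fin(2)] c2 by simp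
  have "card ?B \<le> card (A1 \<union> A2)" using sub fin by (intro card_mono) auto
  also have "\<dots> \<le> card A1 + card A2" by (rule card_Un_le)
  finally show ?thesis using c1 c2 by simp
qed

end


context cs2
begin

lemma h_mono: "N \<le> M \<Longrightarrow> h N \<le> h M"
  unfolding h_eq by (intro power_increasing tri_mono) auto

lemma h_gt: "N < h N"
proof -
  have "N < 5 ^ N" by (rule lt_pow5)
  also have "(5::nat) ^ N \<le> 5 ^ tri N" by (intro power_increasing tri_ge) auto
  finally show ?thesis by (simp add: h_eq)
qed

lemma hN_le:
  assumes "n < N" "a < r N" "b < r N" "a \<noteq> b" "\<bar>e\<bar> < int (h N)"
    "int k = int (off N b) - int (off N a) + e"
    "a' < r (N - 1)" "b' < r (N - 1)" "\<bar>e'\<bar> < int (h (N - 1))"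
    "e = int (off (N - 1) b') - int (off (N - 1) a') + e'"
  shows "h N \<le> 2 * k"
proof -
  obtain N' where N': "N = Suc N'" using assms(1) by (cases N) auto
  define Q where "Q = (5::nat) ^ (tri N' + N')"
  have hN: "h N = 5 * Q" using h_Suc_eq N' Q_def by simp
  have oa: "off N' a' \<le> Q" "off N' b' \<le> Q" using off_le assms(7,8) N' Q_def by auto
  have hN': "h N' \<le> Q" unfolding h_eq Q_def by (intro power_increasing) auto
  have ee: "\<bar>e\<bar> < 2 * int Q" using assms(9,10) oa hN' N' by simp
  have ab: "a < b" using bad_lt[OF assms(2-6)] .
  have "off N a + h N \<le> off N b" using off_gap[OF ab] .
  then have "int (5 * Q) - 2 * int Q < int k" using assms(6) ee hN by linarith
  then show ?thesis using hN by linarith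
qed

lemma V_card: "card {N. n < N \<and> h N \<le> 2 * k \<and> k < h (Suc N)} \<le> 2"
proof -
  let ?V = "{N. n < N \<and> h N \<le> 2 * k \<and> k < h (Suc N)}"
  have fin: "finite ?V"
  proof (rule finite_subset)
    show "?V \<subseteq> {..2 * k}" using h_gt by (auto intro: less_imp_le_nat less_le_trans)
  qed auto
  show ?thesis
  proof (cases "?V = {}")
    case True
    have "card ?V = 0" by (simp only: True card.empty)
    then show ?thesis by simp
  next
    case False
    define N1 where "N1 = Min ?V"
    have N1: "N1 \<in> ?V" unfolding N1_def using Min_in[OF fin False] .
    have "?V \<subseteq> {N1, Suc N1}"
    proof
      fix N assume N: "N \<in> ?V"
      have ge: "N1 \<le> N" unfolding N1_def using Min_le[OF fin N] .
      have "\<not> Suc (Suc N1) \<le> N"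
      proof
        assume "Suc (Suc N1) \<le> N"
        then have "h (Suc (Suc N1)) \<le> h N" by (rule h_mono)
        moreover have "5 * h (Suc N1) \<le> h (Suc (Suc N1))"
          unfolding h_eq tri_Suc by (simp add: power_add)
        ultimately show False using N N1 by simp
      qed
      then show "N \<in> {N1, Suc N1}" using ge by auto
    qed
    then have "card ?V \<le> card {N1, Suc N1}" by (intro card_mono) auto
    also have "\<dots> \<le> 2" by (simp add: card_insert_if)
    finally show ?thesis .
  qed
qed

lemma F_lim: "\<exists>N0. \<forall>N\<ge>N0. (real (cc N) + 2) / (real N + 2) < d" if "0 < d"
proof -
  have "(\<lambda>N::nat. (sqrt (real N) + 3) / (real N + 2)) \<longlonglongrightarrow> 0" by real_asymp
  from LIMSEQ_D[OF this that] obtain N0 where N0: "\<forall>N\<ge>N0. norm ((sqrt (real N) + 3) / (real N + 2) - 0) < d" by blast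
  show ?thesis
  proof (intro exI allI impI)
    fix N assume "N0 \<le> N"
    then have "(sqrt (real N) + 3) / (real N + 2) < d" using N0 by auto
    moreover have "(real (cc N) + 2) / (real N + 2) \<le> (sqrt (real N) + 3) / (real N + 2)"
      using cc_real[of N] by (intro divide_right_mono) auto
    ultimately show "(real (cc N) + 2) / (real N + 2) < d" by linarith
  qed
qed

lemma core_lim: "(\<lambda>k. measure lebesgue (C n \<inter> (T ^^ k) ` C n)) \<longlonglongrightarrow> 0"
proof (rule LIMSEQ_I)
  fix eps :: real assume eps: "0 < eps"
  define M where "M = real (h n) * w n"
  have M0: "0 < M" unfolding M_def using h_pos[of n] w_pos[of n] by simp
  obtain N0 where N0: "\<And>N. N0 \<le> N \<Longrightarrow> (real (cc N) + 2) / (real N + 2) < eps / (4 * M)"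
    using F_lim[of "eps / (4 * M)"] eps M0 by auto
  show "\<exists>no. \<forall>k\<ge>no. norm (measure lebesgue (C n \<inter> (T ^^ k) ` C n) - 0) < eps"
  proof (intro exI allI impI)
    fix k assume k: "h (Suc (max n N0)) \<le> k"
    let ?V = "{N. n < N \<and> h N \<le> 2 * k \<and> k < h (Suc N)}"
    have kn: "h (Suc n) \<le> k" using k h_mono[of "Suc n" "Suc (max n N0)"] by simp
    have finV: "finite ?V"
    proof (rule finite_subset)
      show "?V \<subseteq> {..2 * k}" using h_gt by (auto intro: less_imp_le_nat less_le_trans)
    qed auto
    have bound: "measure lebesgue (C n \<inter> (T ^^ k) ` C n)
       \<le> (\<Sum>N\<in>?V. real (card (Bad N k \<inter> {..<r N})) * (real (h n) * w n / real (r N)))"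
    proof (rule core_meas[OF kn finV])
      fix N a b e a' b' e'
      assume H: "n < N" "k < h (Suc N)" "a < r N" "b < r N" "a \<noteq> b" "\<bar>e\<bar> < int (h N)"
        "int k = int (off N b) - int (off N a) + e" "a' < r (N - 1)" "b' < r (N - 1)"
        "\<bar>e'\<bar> < int (h (N - 1))" "e = int (off (N - 1) b') - int (off (N - 1) a') + e'"
      have "h N \<le> 2 * k" using hN_le[OF H(1,3-11)] .
      then show "N \<in> ?V \<and> a \<in> Bad N k" using H unfolding Bad_def by blast
    qed
    have tm: "real (card (Bad N k \<inter> {..<r N})) * (M / real (r N)) \<le> eps / (4 * M) * M" if "N \<in> ?V" for N
    proof -
      have NN0: "N0 \<le> N"
      proof (rule ccontr)
        assume "\<not> N0 \<le> N"
        then have "h (Suc N) \<le> h (Suc (max n N0))" by (intro h_mono) auto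
        then show False using that k by simp
      qed
      have N1: "1 \<le> N" using that by auto
      have "real (card (Bad N k \<inter> {..<r N})) \<le> real (cc N) + 2" using bad_card[OF N1, of k] by linarith
      moreover have "real (r N) = real N + 2" by (simp add: r_def)
      ultimately have "real (card (Bad N k \<inter> {..<r N})) / real (r N) \<le> (real (cc N) + 2) / (real N + 2)"
        by (metis divide_right_mono of_nat_0_le_iff add_nonneg_nonneg zero_le_numeral)
      also have "\<dots> < eps / (4 * M)" using N0[OF NN0] .
      finally have "real (card (Bad N k \<inter> {..<r N})) / real (r N) * M \<le> eps / (4 * M) * M"
        using M0 by (intro mult_right_mono) auto
      then show ?thesis by (simp add: field_simps)
    qed
    have "measure lebesgue (C n \<inter> (T ^^ k) ` C n) \<le> (\<Sum>N\<in>?V. eps / (4 * M) * M)"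
      using bound tm unfolding M_def by (meson order_trans sum_mono)
    also have "\<dots> = real (card ?V) * (eps / 4)" using M0 by simp
    also have "\<dots> \<le> 2 * (eps / 4)" using V_card[of n k] eps by (intro mult_right_mono) auto
    finally have "measure lebesgue (C n \<inter> (T ^^ k) ` C n) < eps" using eps by linarith
    then show "norm (measure lebesgue (C n \<inter> (T ^^ k) ` C n) - 0) < eps" by simp
  qed
qed

theorem zt: "zero_type (cs_space r s) (cs_T r s)"
  by (rule zero_from_core[OF core_lim])

end


theorem mainTheorem14:
  fixes r :: "nat \<Rightarrow> nat" and s :: "nat \<Rightarrow> nat \<Rightarrow> nat"
  assumes r_def: "\<And>n. r n = n + 2"
    and h_def: "\<And>n. cs_height r s n = 5 ^ (n * (n + 1) div 2)"
    and H_def: "\<And>n. cs_H r s n =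
        {0} \<union> {j * 5 ^ (n * (n + 1) div 2) | j. 1 \<le> j \<and> j \<le> nat \<lceil>sqrt (real n)\<rceil>}
            \<union> {5 ^ (n * (n + 1) div 2 + i) | i. nat \<lceil>sqrt (real n)\<rceil> \<le> i \<and> i \<le> n}"
  shows "zero_type (cs_space r s) (cs_T r s)"
proof -
  interpret cs2 r s
  proof unfold_locales
    show "\<And>n. 0 < r n" using r_def by simp
  qed (use r_def h_def H_def in auto)
  show ?thesis by (rule zt)
qed

end
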